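(* Let $T>0$, $N=2$, $M=1$. Consider the problem of minimizing $\mathbb V(T)=\frac12(\xi_1(T)^2+\xi_2(T)^2)$ over $\alpha\in\mathcal U_1$, where $\dot\xi_i=-\xi_i+(1-\alpha_i)\bar\xi$ ($i=1,2$), $\bar\xi=\frac12(\xi_1+\xi_2)$, with initial datum satisfying $\bar\xi(0)>0$ and $\xi_1(0)>\xi_2(0)$. Let $\alpha=(\alpha_1,\alpha_2)\in\mathcal U_1$ be an optimal control whose trajectory $\xi$ satisfies $\xi_1(t)\ge\xi_2(t)$ for all $t\in[0,T]$. Define $t_0=2\ln(\xi_1(0)/\bar\xi(0))$. Then: (i) $T\ge t_0$ if and only if $\xi_1(T)=\xi_2(T)$. In this case $\alpha_1+\alpha_2\equiv1$ (so $\bar\xi(t)=\bar\xi(0)e^{-t/2}$); for instance the control $(\alpha_1,\alpha_2)(t)=(1,0)$ for $t\in[0,t_0)$ and $(\alpha_1,\alpha_2)(t)=(1/2,1/2)$ for $t\in[t_0,T]$ is optimal. (ii) If $T<t_0$, then $\alpha(t)=(0,0)$ for all $t\in[0,t^* )$ and $\alpha(t)=(1,0)$ for all $t\in[t^*,T]$, where $t^*=2\ln\bar X$ and $\bar X\in[1,e^{T/2})$ is $$\bar X=\arg\min_{X\in[1,e^{T/2}]}\Big[\big(\xi_1(0)+\bar\xi(0)(X^2-1)\big)^2+\big(\xi_2(0)+\bar\xi(0)(X^2-1)+2\bar\xi(0)X(e^{T/2}-X)\big)^2\Big].$$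
   Context: $\mathcal U_1$ is the set of measurable $\alpha:[0,T]\to[0,1]^2$ with $\alpha_1(t)+\alpha_2(t)\le1$ for all $t$. The $\xi_i$ are projected velocities in a collective migration model with target velocity $0$. *)

theory Defs
  imports "HOL-Analysis.Analysis"
begin

definition U1 :: "real \<Rightarrow> (real \<Rightarrow> real \<times> real) set" where
  "U1 T = {\<alpha>. \<alpha> \<in> borel_measurable (restrict_space lebesgue {0..T}) \<and>
     (\<forall>t\<in>{0..T}. 0 \<le> fst (\<alpha> t) \<and> fst (\<alpha> t) \<le> 1 \<and> 0 \<le> snd (\<alpha> t) \<and> snd (\<alpha> t) \<le> 1
        \<and> fst (\<alpha> t) + snd (\<alpha> t) \<le> 1)}"

definition mean :: "real \<times> real \<Rightarrow> real" where
  "mean x = (fst x + snd x) / 2"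

definition dyn :: "real \<times> real \<Rightarrow> real \<times> real \<Rightarrow> real \<times> real" where
  "dyn a x = (- fst x + (1 - fst a) * mean x, - snd x + (1 - snd a) * mean x)"

text \<open>xi is the (Caratheodory) trajectory on [0,T] of control alpha with initial datum x0.\<close>
definition is_traj :: "real \<Rightarrow> (real \<Rightarrow> real \<times> real) \<Rightarrow> real \<times> real \<Rightarrow> (real \<Rightarrow> real \<times> real) \<Rightarrow> bool" where
  "is_traj T \<alpha> x0 \<xi> \<longleftrightarrow> \<xi> 0 = x0 \<and>
     (\<forall>t\<in>{0..T}. ((\<lambda>s. dyn (\<alpha> s) (\<xi> s)) has_integral (\<xi> t - \<xi> 0)) {0..t})"

definition cost :: "real \<times> real \<Rightarrow> real" where
  "cost x = (fst x ^ 2 + snd x ^ 2) / 2"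

definition optimal_pair :: "real \<Rightarrow> real \<times> real \<Rightarrow> (real \<Rightarrow> real \<times> real) \<Rightarrow> (real \<Rightarrow> real \<times> real) \<Rightarrow> bool" where
  "optimal_pair T x0 \<alpha> \<xi> \<longleftrightarrow> \<alpha> \<in> U1 T \<and> is_traj T \<alpha> x0 \<xi> \<and>
     (\<forall>\<beta> \<eta>. \<beta> \<in> U1 T \<longrightarrow> is_traj T \<beta> x0 \<eta> \<longrightarrow> cost (\<xi> T) \<le> cost (\<eta> T))"

definition optimal_control :: "real \<Rightarrow> real \<times> real \<Rightarrow> (real \<Rightarrow> real \<times> real) \<Rightarrow> bool" where
  "optimal_control T x0 \<alpha> \<longleftrightarrow> (\<exists>\<xi>. optimal_pair T x0 \<alpha> \<xi>)"

end

theory Submission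
  imports Defs
begin

lemma sf_leb: "sigma_finite_measure (lebesgue :: real measure)"
proof
  obtain A :: "real set set" where "countable A" "A \<subseteq> sets lborel" "\<Union>A = space lborel" "\<forall>a\<in>A. emeasure lborel a \<noteq> \<infinity>"
    using sigma_finite_measure.sigma_finite_countable[OF lborel.sigma_finite_measure_axioms] by blast
  then show "\<exists>A. countable A \<and> A \<subseteq> sets (lebesgue :: real measure) \<and> \<Union> A = space lebesgue \<and> (\<forall>a\<in>A. emeasure lebesgue a \<noteq> \<infinity>)"
    by (intro exI[of _ A]) (auto simp: subset_eq)
qed
interpretation leb_pair: pair_sigma_finite "lebesgue :: real measure" "lebesgue :: real measure"
  by (simp add: pair_sigma_finite_def sf_leb)

lemma PR_fub:
  fixes g \<phi> \<phi>' :: "real \<Rightarrow> real"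
  assumes ab: "a \<le> b"
    and gi: "g absolutely_integrable_on {a..b}"
    and d\<phi>: "\<And>x. (\<phi> has_real_derivative \<phi>' x) (at x)"
    and c\<phi>': "continuous_on UNIV \<phi>'"
  shows "integral {a..b} (\<lambda>s. \<phi>' s * integral {a..s} g) = integral {a..b} (\<lambda>r. g r * (\<phi> b - \<phi> r))"
proof -
  define gg where "gg r = indicator {a..b} r * g r" for r
  have gg_int: "integrable lebesgue gg"
    using gi unfolding set_integrable_def gg_def by simp
  then have gg_meas[measurable]: "gg \<in> borel_measurable lebesgue" by auto
  have \<phi>'_meas[measurable]: "\<phi>' \<in> borel_measurable lebesgue"
    by (rule measurable_completion) (simp add: borel_measurable_continuous_onI[OF c\<phi>'])
  have \<phi>'_bor[measurable]: "\<phi>' \<in> borel_measurable borel" by (rule borel_measurable_continuous_onI[OF c\<phi>'])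
  obtain C where C: "C \<ge> 0" "\<And>x. x \<in> {a..b} \<Longrightarrow> norm (\<phi>' x) \<le> C"
  proof -
    have "continuous_on {a..b} \<phi>'" using c\<phi>' by (rule continuous_on_subset) simp
    from continuous_on_compact_bound[OF compact_Icc this] that show ?thesis by blast
  qed
  define F where "F p = (if a \<le> snd p \<and> snd p \<le> fst p \<and> fst p \<le> b then \<phi>' (fst p) * gg (snd p) else 0)" for p :: "real \<times> real"
  have id_meas: "(\<lambda>x::real. x) \<in> borel_measurable lebesgue" by (rule measurable_completion) simp
  have fst_meas[measurable]: "(\<lambda>p. fst p :: real) \<in> borel_measurable (lebesgue \<Otimes>\<^sub>M lebesgue)"
    using measurable_compose[OF measurable_fst id_meas, of lebesgue] by simp
  have snd_meas[measurable]: "(\<lambda>p. snd p :: real) \<in> borel_measurable (lebesgue \<Otimes>\<^sub>M lebesgue)"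
    using measurable_compose[OF measurable_snd id_meas, of lebesgue] by simp
  have F_meas[measurable]: "F \<in> borel_measurable (lebesgue \<Otimes>\<^sub>M lebesgue)"
    unfolding F_def by measurable
  have Fs_int: "integrable lebesgue (\<lambda>r. F (s, r))" for s
  proof (rule Bochner_Integration.integrable_bound[of _ "\<lambda>r. C * gg r"])
    show "integrable lebesgue (\<lambda>r. C * gg r)" using gg_int by simp
    show "(\<lambda>r. F (s, r)) \<in> borel_measurable lebesgue" using F_meas by measurable
    show "AE r in lebesgue. norm (F (s, r)) \<le> norm (C * gg r)"
      using C by (auto simp: F_def abs_mult intro!: mult_right_mono)
  qed
  have Fs_bound: "norm (\<integral>r. norm (F (s, r)) \<partial>lebesgue) \<le> indicator {a..b} s * (C * (\<integral>r. norm (gg r) \<partial>lebesgue))" for s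
  proof (cases "s \<in> {a..b}")
    case True
    have "(\<integral>r. norm (F (s, r)) \<partial>lebesgue) \<le> (\<integral>r. C * norm (gg r) \<partial>lebesgue)"
    proof (rule integral_mono)
      show "integrable lebesgue (\<lambda>r. norm (F (s, r)))" using Fs_int[of s] by (rule integrable_norm)
      show "integrable lebesgue (\<lambda>r. C * norm (gg r))" using gg_int by simp
      show "norm (F (s,r)) \<le> C * norm (gg r)" for r using C True by (auto simp: F_def abs_mult intro!: mult_right_mono)
    qed
    then show ?thesis using True by (simp add: integral_nonneg_AE)
  next
    case False
    then have "\<And>r. F (s, r) = 0" by (auto simp: F_def)
    then show ?thesis using False by simp
  qed
  have F_int: "integrable (lebesgue \<Otimes>\<^sub>M lebesgue) F"
  proof (rule leb_pair.Fubini_integrable)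
    show "integrable lebesgue (\<lambda>s. \<integral>r. norm (F (s, r)) \<partial>lebesgue)"
    proof (rule Bochner_Integration.integrable_bound[of _ "\<lambda>s. indicator {a..b} s * (C * (\<integral>r. norm (gg r) \<partial>lebesgue))"])
      show "integrable lebesgue (\<lambda>s. indicator {a..b} s * (C * (\<integral>r. norm (gg r) \<partial>lebesgue)))"
        by (intro integrable_mult_left) (simp add: integrable_real_indicator emeasure_lborel_Icc_eq)
      show "(\<lambda>s. \<integral>r. norm (F (s, r)) \<partial>lebesgue) \<in> borel_measurable lebesgue"
      proof -
        have "(\<lambda>p. norm (F p)) \<in> borel_measurable (lebesgue \<Otimes>\<^sub>M lebesgue)" by measurable
        then show ?thesis
          using sigma_finite_measure.borel_measurable_lebesgue_integral[OF sf_leb, of "\<lambda>s r. norm (F (s,r))" lebesgue]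
          by (simp add: case_prod_unfold)
      qed
      show "AE s in lebesgue. norm (\<integral>r. norm (F (s, r)) \<partial>lebesgue) \<le> norm (indicator {a..b} s * (C * (\<integral>r. norm (gg r) \<partial>lebesgue)))"
      proof (rule AE_I2)
        fix s show "norm (\<integral>r. norm (F (s, r)) \<partial>lebesgue) \<le> norm (indicator {a..b} s * (C * (\<integral>r. norm (gg r) \<partial>lebesgue)))"
          using Fs_bound[of s] unfolding real_norm_def by linarith
      qed
    qed
    show "AE s in lebesgue. integrable lebesgue (\<lambda>r. F (s, r))" using Fs_int by simp
  qed (simp add: F_meas)
  have fub: "(\<integral>r. (\<integral>s. F (s, r) \<partial>lebesgue) \<partial>lebesgue) = (\<integral>s. (\<integral>r. F (s, r) \<partial>lebesgue) \<partial>lebesgue)"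
    using leb_pair.Fubini_integral[of "\<lambda>s r. F (s, r)"] F_int by simp
  have c\<phi>: "continuous_on UNIV \<phi>"
    using d\<phi> by (meson DERIV_isCont continuous_at_imp_continuous_on)
  have inner_s: "(\<integral>r. F (s, r) \<partial>lebesgue) = indicator {a..b} s * (\<phi>' s * integral {a..s} g)" for s
  proof (cases "s \<in> {a..b}")
    case True
    have "(\<integral>r. F (s,r) \<partial>lebesgue) = (\<integral>r. \<phi>' s * (indicator {a..s} r *\<^sub>R g r) \<partial>lebesgue)"
      by (rule Bochner_Integration.integral_cong) (use True in \<open>auto simp: F_def gg_def indicator_def\<close>)
    also have "\<dots> = \<phi>' s * (LINT r:{a..s}|lebesgue. g r)" by (simp add: set_lebesgue_integral_def)
    also have "(LINT r:{a..s}|lebesgue. g r) = integral {a..s} g"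
      by (rule set_lebesgue_integral_eq_integral(2), rule set_integrable_subset[OF gi]) (use True in auto)
    finally show ?thesis using True by simp
  next
    case False
    then have "\<And>r. F (s,r) = 0" by (auto simp: F_def)
    then show ?thesis using False by simp
  qed
  have inner_r: "(\<integral>s. F (s, r) \<partial>lebesgue) = indicator {a..b} r * (g r * (\<phi> b - \<phi> r))" for r
  proof (cases "r \<in> {a..b}")
    case True
    have "(\<integral>s. F (s,r) \<partial>lebesgue) = (\<integral>s. g r * (\<phi>' s * indicator {r..b} s) \<partial>lebesgue)"
      by (rule Bochner_Integration.integral_cong) (use True in \<open>auto simp: F_def gg_def indicator_def\<close>)
    also have "\<dots> = g r * (\<integral>s. \<phi>' s * indicator {r..b} s \<partial>lebesgue)" by simp
    also have "(\<integral>s. \<phi>' s * indicator {r..b} s \<partial>lebesgue) = (\<integral>s. \<phi>' s * indicator {r..b} s \<partial>lborel)"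
      by (rule integral_completion) measurable
    also have "\<dots> = \<phi> b - \<phi> r"
      by (rule integral_FTC_Icc_real) (use True d\<phi> c\<phi>' in \<open>auto simp: continuous_on_eq_continuous_at\<close>)
    finally show ?thesis using True by simp
  next
    case False
    then have "\<And>s. F (s,r) = 0" by (auto simp: F_def)
    then show ?thesis using False by simp
  qed
  have ig: "g integrable_on {a..b}" using gi set_lebesgue_integral_eq_integral(1) by blast
  have lhs: "(\<integral>s. (\<integral>r. F (s, r) \<partial>lebesgue) \<partial>lebesgue) = integral {a..b} (\<lambda>s. \<phi>' s * integral {a..s} g)"
  proof -
    have cont: "continuous_on {a..b} (\<lambda>s. \<phi>' s * integral {a..s} g)"
      by (intro continuous_intros indefinite_integral_continuous_1 ig continuous_on_subset[OF c\<phi>']) auto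
    have "(\<integral>s. (\<integral>r. F (s, r) \<partial>lebesgue) \<partial>lebesgue) = (LINT s:{a..b}|lebesgue. \<phi>' s * integral {a..s} g)"
      by (simp add: inner_s set_lebesgue_integral_def)
    also have "\<dots> = integral {a..b} (\<lambda>s. \<phi>' s * integral {a..s} g)"
      by (rule set_lebesgue_integral_eq_integral(2)) (rule absolutely_integrable_continuous_real[OF cont])
    finally show ?thesis .
  qed
  have rhs: "(\<integral>r. (\<integral>s. F (s, r) \<partial>lebesgue) \<partial>lebesgue) = integral {a..b} (\<lambda>r. g r * (\<phi> b - \<phi> r))"
  proof -
    obtain C2 where C2: "C2 \<ge> 0" "\<And>x. x \<in> {a..b} \<Longrightarrow> norm (\<phi> b - \<phi> x) \<le> C2"
    proof -
      have "continuous_on {a..b} (\<lambda>x. \<phi> b - \<phi> x)" by (intro continuous_intros continuous_on_subset[OF c\<phi>]) auto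
      from continuous_on_compact_bound[OF compact_Icc this] that show ?thesis by blast
    qed
    have si: "set_integrable lebesgue {a..b} (\<lambda>r. g r * (\<phi> b - \<phi> r))"
      unfolding set_integrable_def
    proof (rule Bochner_Integration.integrable_bound[of _ "\<lambda>r. C2 * gg r"])
      show "integrable lebesgue (\<lambda>r. C2 * gg r)" using gg_int by simp
      have "(\<lambda>r. gg r * (\<phi> b - \<phi> r)) \<in> borel_measurable lebesgue"
      proof -
        have "(\<lambda>r. \<phi> b - \<phi> r) \<in> borel_measurable lebesgue"
        proof -
          have [measurable]: "\<phi> \<in> borel_measurable borel" by (rule borel_measurable_continuous_onI[OF c\<phi>])
          show ?thesis by (rule measurable_completion) measurable
        qed
        then show ?thesis by measurable
      qed
      then show "(\<lambda>r. indicator {a..b} r *\<^sub>R (g r * (\<phi> b - \<phi> r))) \<in> borel_measurable lebesgue"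
        by (simp add: gg_def mult.assoc)
      show "AE r in lebesgue. norm (indicator {a..b} r *\<^sub>R (g r * (\<phi> b - \<phi> r))) \<le> norm (C2 * gg r)"
        using C2 by (intro AE_I2) (auto simp: gg_def indicator_def abs_mult mult.commute[of C2] intro!: mult_left_mono)
    qed
    have "(\<integral>r. (\<integral>s. F (s, r) \<partial>lebesgue) \<partial>lebesgue) = (LINT r:{a..b}|lebesgue. g r * (\<phi> b - \<phi> r))"
      by (simp add: inner_r set_lebesgue_integral_def)
    also have "\<dots> = integral {a..b} (\<lambda>r. g r * (\<phi> b - \<phi> r))"
      by (rule set_lebesgue_integral_eq_integral(2)) (rule si)
    finally show ?thesis .
  qed
  show ?thesis using fub lhs rhs by simp
qed

lemma absint_cont_mult:
  fixes g f :: "real \<Rightarrow> real"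
  assumes g: "g absolutely_integrable_on {a..b}" and f: "continuous_on {a..b} f"
  shows "(\<lambda>x. f x * g x) absolutely_integrable_on {a..b}"
proof (rule absolutely_integrable_bounded_measurable_product_real)
  show "f \<in> borel_measurable (lebesgue_on {a..b})"
    using f by (intro continuous_imp_measurable_on_sets_lebesgue) auto
  show "bounded (f ` {a..b})" using f by (intro compact_imp_bounded compact_continuous_image) auto
qed (use g in auto)

lemma PR:
  fixes u g \<phi> \<phi>' :: "real \<Rightarrow> real"
  assumes ab: "a \<le> b"
    and gi: "g absolutely_integrable_on {a..b}"
    and u: "\<And>t. t \<in> {a..b} \<Longrightarrow> u t = u a + integral {a..t} g"
    and d\<phi>: "\<And>x. (\<phi> has_real_derivative \<phi>' x) (at x)"
    and c\<phi>': "continuous_on UNIV \<phi>'"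
  shows "((\<lambda>s. \<phi>' s * u s + \<phi> s * g s) has_integral (\<phi> b * u b - \<phi> a * u a)) {a..b}"
proof -
  have c\<phi>: "continuous_on UNIV \<phi>"
    using d\<phi> by (meson DERIV_isCont continuous_at_imp_continuous_on)
  have ig: "g integrable_on {a..b}" using gi set_lebesgue_integral_eq_integral(1) by blast
  have cG: "continuous_on {a..b} (\<lambda>s. integral {a..s} g)" by (rule indefinite_integral_continuous_1[OF ig])
  have h1: "((\<lambda>s. u a * \<phi>' s) has_integral (u a * (\<phi> b - \<phi> a))) {a..b}"
  proof -
    have "(\<phi>' has_integral (\<phi> b - \<phi> a)) {a..b}"
      by (rule fundamental_theorem_of_calculus[OF ab])
         (use d\<phi> in \<open>auto simp: has_real_derivative_iff_has_vector_derivative intro: has_vector_derivative_at_within\<close>)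
    then show ?thesis by (rule has_integral_mult_right)
  qed
  have int2: "(\<lambda>s. \<phi>' s * integral {a..s} g) integrable_on {a..b}"
    by (intro integrable_continuous_real continuous_intros cG continuous_on_subset[OF c\<phi>']) auto
  have h2: "((\<lambda>s. \<phi>' s * integral {a..s} g) has_integral integral {a..b} (\<lambda>r. g r * (\<phi> b - \<phi> r))) {a..b}"
    using int2 PR_fub[OF ab gi d\<phi> c\<phi>'] by (metis integrable_integral)
  have int3: "(\<lambda>r. g r * (\<phi> b - \<phi> r)) integrable_on {a..b}"
  proof -
    have "(\<lambda>r. (\<phi> b - \<phi> r) * g r) absolutely_integrable_on {a..b}"
      by (rule absint_cont_mult[OF gi]) (intro continuous_intros continuous_on_subset[OF c\<phi>]; auto)
    then show ?thesis using set_lebesgue_integral_eq_integral(1) by (simp add: mult.commute)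
  qed
  have h3: "((\<lambda>s. \<phi> b * g s - g s * (\<phi> b - \<phi> s)) has_integral (\<phi> b * integral {a..b} g - integral {a..b} (\<lambda>r. g r * (\<phi> b - \<phi> r)))) {a..b}"
    by (intro has_integral_diff has_integral_mult_right integrable_integral ig int3)
  have "((\<lambda>s. u a * \<phi>' s + \<phi>' s * integral {a..s} g + (\<phi> b * g s - g s * (\<phi> b - \<phi> s))) has_integral
      (u a * (\<phi> b - \<phi> a) + integral {a..b} (\<lambda>r. g r * (\<phi> b - \<phi> r)) + (\<phi> b * integral {a..b} g - integral {a..b} (\<lambda>r. g r * (\<phi> b - \<phi> r))))) {a..b}"
    by (intro has_integral_add h1 h2 h3)
  moreover have eqs: "u a * (\<phi> b - \<phi> a) + integral {a..b} (\<lambda>r. g r * (\<phi> b - \<phi> r)) + (\<phi> b * integral {a..b} g - integral {a..b} (\<lambda>r. g r * (\<phi> b - \<phi> r))) = \<phi> b * u b - \<phi> a * u a"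
  proof -
    have ub: "u b = u a + integral {a..b} g" using u[of b] ab by simp
    have alg: "\<And>x y z w v I :: real. z = x + y \<Longrightarrow> x * (v - w) + I + (v * y - I) = v * z - w * x" by (simp add: algebra_simps)
    show ?thesis by (rule alg[OF ub])
  qed
  ultimately have "((\<lambda>s. u a * \<phi>' s + \<phi>' s * integral {a..s} g + (\<phi> b * g s - g s * (\<phi> b - \<phi> s))) has_integral
      (\<phi> b * u b - \<phi> a * u a)) {a..b}"
    using has_integral_eq_rhs[OF _ sym] by blast
  then show ?thesis
  proof (rule has_integral_eq[rotated])
    fix s assume s: "s \<in> {a..b}"
    show "u a * \<phi>' s + \<phi>' s * integral {a..s} g + (\<phi> b * g s - g s * (\<phi> b - \<phi> s)) = \<phi>' s * u s + \<phi> s * g s"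
      by (subst u[OF s]) (simp add: algebra_simps)
  qed
qed

lemma bl_mean: "bounded_linear mean"
  unfolding mean_def
  by (rule bounded_linear_compose[OF bounded_linear_divide[of 2]]) (intro bounded_linear_add bounded_linear_fst bounded_linear_snd)

lemma bl_diff: "bounded_linear (\<lambda>x::real\<times>real. fst x - snd x)"
  by (intro bounded_linear_intros)

lemma hk_zero_AE:
  fixes f :: "real \<Rightarrow> real"
  assumes f0: "(f has_integral 0) {a..b}" and nn: "\<And>x. x \<in> {a..b} \<Longrightarrow> f x \<ge> 0"
  shows "AE x in lborel. x \<in> {a..b} \<longrightarrow> f x = 0"
proof -
  have ai: "f absolutely_integrable_on {a..b}"
    using f0 nn by (intro nonnegative_absolutely_integrable_1) (auto simp: has_integral_integrable)
  have "(LINT x:{a..b}|lebesgue. f x) = integral {a..b} f" by (rule set_lebesgue_integral_eq_integral(2)[OF ai])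
  also have "\<dots> = 0" using f0 by (rule integral_unique)
  finally have "(\<integral>x. indicator {a..b} x *\<^sub>R f x \<partial>lebesgue) = 0" by (simp add: set_lebesgue_integral_def)
  moreover have "integrable lebesgue (\<lambda>x. indicator {a..b} x *\<^sub>R f x)" using ai by (simp add: set_integrable_def)
  ultimately have "AE x in lebesgue. indicator {a..b} x *\<^sub>R f x = 0"
    using nn by (subst integral_nonneg_eq_0_iff_AE[symmetric]) (auto simp: indicator_def)
  then have "AE x in lebesgue. x \<in> {a..b} \<longrightarrow> f x = 0"
    by eventually_elim (auto simp: indicator_def)
  then show ?thesis by (simp add: AE_completion_iff)
qed

lemma hi_eq: "(f has_integral i) S \<Longrightarrow> (\<And>x. x \<in> S \<Longrightarrow> f x = g x) \<Longrightarrow> i = j \<Longrightarrow> (g has_integral j) S"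
  using has_integral_eq by blast

lemma ftc_real:
  fixes F f :: "real \<Rightarrow> real"
  assumes "a \<le> b" "\<And>x. (F has_real_derivative f x) (at x)"
  shows "(f has_integral (F b - F a)) {a..b}"
  by (rule fundamental_theorem_of_calculus[OF assms(1)])
     (auto simp: has_real_derivative_iff_has_vector_derivative[symmetric] intro: has_field_derivative_at_within assms(2))

locale adm =
  fixes T :: real and x0 :: "real \<times> real" and \<beta> \<eta> :: "real \<Rightarrow> real \<times> real"
  assumes T_pos: "T > 0" and m0_pos: "mean x0 > 0"
    and U: "\<beta> \<in> U1 T" and tr: "is_traj T \<beta> x0 \<eta>"
begin

definition "m t = mean (\<eta> t)"
definition "d t = fst (\<eta> t) - snd (\<eta> t)"
definition "b t = (fst (\<beta> t) + snd (\<beta> t)) / 2"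
abbreviation "m0 \<equiv> mean x0"
abbreviation "d0 \<equiv> fst x0 - snd x0"

lemma beta_bounds:
  assumes "t \<in> {0..T}"
  shows "0 \<le> fst (\<beta> t)" "fst (\<beta> t) \<le> 1" "0 \<le> snd (\<beta> t)" "snd (\<beta> t) \<le> 1" "fst (\<beta> t) + snd (\<beta> t) \<le> 1"
  using U assms by (auto simp: U1_def)

lemma b_bounds: "t \<in> {0..T} \<Longrightarrow> 0 \<le> b t \<and> b t \<le> 1/2"
  using beta_bounds[of t] by (auto simp: b_def)

lemma eta0: "\<eta> 0 = x0" using tr by (simp add: is_traj_def)

lemma hint: "t \<in> {0..T} \<Longrightarrow> ((\<lambda>s. dyn (\<beta> s) (\<eta> s)) has_integral (\<eta> t - x0)) {0..t}"
proof -
  assume t: "t \<in> {0..T}"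
  from tr have "\<eta> 0 = x0" "\<forall>t\<in>{0..T}. ((\<lambda>s. dyn (\<beta> s) (\<eta> s)) has_integral (\<eta> t - \<eta> 0)) {0..t}"
    by (auto simp: is_traj_def)
  then show ?thesis using t by auto
qed

lemma eta_cont: "continuous_on {0..T} \<eta>"
proof -
  have int: "(\<lambda>s. dyn (\<beta> s) (\<eta> s)) integrable_on {0..T}" using hint[of T] T_pos by (auto simp: has_integral_integrable)
  have "continuous_on {0..T} (\<lambda>t. x0 + integral {0..t} (\<lambda>s. dyn (\<beta> s) (\<eta> s)))"
    by (intro continuous_intros indefinite_integral_continuous_1 int)
  moreover have "x0 + integral {0..t} (\<lambda>s. dyn (\<beta> s) (\<eta> s)) = \<eta> t" if t: "t \<in> {0..T}" for t
  proof -
    have "integral {0..t} (\<lambda>s. dyn (\<beta> s) (\<eta> s)) = \<eta> t - x0" using hint[OF t] by (rule integral_unique)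
    then show ?thesis by simp
  qed
  ultimately show ?thesis using continuous_on_eq by blast
qed

lemma m_cont: "continuous_on {0..T} m"
  unfolding m_def mean_def by (intro continuous_intros eta_cont) auto

lemma d_cont: "continuous_on {0..T} d"
  unfolding d_def by (intro continuous_intros eta_cont)

lemma m_0: "m 0 = m0" by (simp add: m_def eta0)
lemma d_0: "d 0 = d0" by (simp add: d_def eta0)

lemma m_int: "t \<in> {0..T} \<Longrightarrow> ((\<lambda>s. - b s * m s) has_integral (m t - m0)) {0..t}"
proof -
  assume t: "t \<in> {0..T}"
  have "((mean \<circ> (\<lambda>s. dyn (\<beta> s) (\<eta> s))) has_integral mean (\<eta> t - x0)) {0..t}"
    by (rule has_integral_linear[OF hint[OF t] bl_mean])
  moreover have "mean (\<eta> t - x0) = m t - m0" unfolding mean_def m_def by (simp add: field_simps)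
  moreover have "(mean \<circ> (\<lambda>s. dyn (\<beta> s) (\<eta> s))) = (\<lambda>s. - b s * m s)"
    by (rule ext) (simp add: mean_def dyn_def b_def m_def field_simps)
  ultimately show ?thesis by simp
qed

lemma d_int: "t \<in> {0..T} \<Longrightarrow> ((\<lambda>s. - d s + (snd (\<beta> s) - fst (\<beta> s)) * m s) has_integral (d t - d0)) {0..t}"
proof -
  assume t: "t \<in> {0..T}"
  have H: "(((\<lambda>x. fst x - snd x) \<circ> (\<lambda>s. dyn (\<beta> s) (\<eta> s))) has_integral (fst (\<eta> t - x0) - snd (\<eta> t - x0))) {0..t}"
    using has_integral_linear[OF hint[OF t] bl_diff] by simp
  have e1: "fst (\<eta> t - x0) - snd (\<eta> t - x0) = d t - d0" by (simp add: d_def)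
  have e2: "((\<lambda>x. fst x - snd x) \<circ> (\<lambda>s. dyn (\<beta> s) (\<eta> s))) = (\<lambda>s. - d s + (snd (\<beta> s) - fst (\<beta> s)) * m s)"
    by (rule ext) (simp add: dyn_def d_def m_def algebra_simps)
  show ?thesis using H unfolding e1 e2 .
qed

lemma m_bdd: obtains B where "\<And>t. t \<in> {0..T} \<Longrightarrow> \<bar>m t\<bar> \<le> B"
  using continuous_on_compact_bound[OF compact_Icc m_cont] by auto

lemma d_bdd: obtains B where "\<And>t. t \<in> {0..T} \<Longrightarrow> \<bar>d t\<bar> \<le> B"
  using continuous_on_compact_bound[OF compact_Icc d_cont] by auto

lemma gm_absint: "(\<lambda>s. - b s * m s) absolutely_integrable_on {0..T}"
proof -
  obtain B where B: "\<And>t. t \<in> {0..T} \<Longrightarrow> \<bar>m t\<bar> \<le> B" using m_bdd by blast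
  show ?thesis
  proof (rule absolutely_integrable_integrable_bound[of _ _ "\<lambda>_. B"])
    show "(\<lambda>s. - b s * m s) integrable_on {0..T}" using m_int[of T] T_pos by (auto simp: has_integral_integrable)
    show "(\<lambda>_. B) integrable_on {0..T}" by (rule integrable_continuous_real) (rule continuous_on_const)
    fix s assume s: "s \<in> {0..T}"
    have "\<bar>b s\<bar> \<le> 1" using b_bounds[OF s] by auto
    then have "\<bar>b s\<bar> * \<bar>m s\<bar> \<le> 1 * B" using B[OF s] by (intro mult_mono) auto
    then show "norm (- b s * m s) \<le> B" by (simp add: abs_mult)
  qed
qed

lemma gd_absint: "(\<lambda>s. - d s + (snd (\<beta> s) - fst (\<beta> s)) * m s) absolutely_integrable_on {0..T}"
proof -
  obtain B where B: "\<And>t. t \<in> {0..T} \<Longrightarrow> \<bar>m t\<bar> \<le> B" using m_bdd by blast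
  obtain B2 where B2: "\<And>t. t \<in> {0..T} \<Longrightarrow> \<bar>d t\<bar> \<le> B2" using d_bdd by blast
  show ?thesis
  proof (rule absolutely_integrable_integrable_bound[of _ _ "\<lambda>_. B2 + B"])
    show "(\<lambda>s. - d s + (snd (\<beta> s) - fst (\<beta> s)) * m s) integrable_on {0..T}" using d_int[of T] T_pos by (auto simp: has_integral_integrable)
    show "(\<lambda>_. B2 + B) integrable_on {0..T}" by (rule integrable_continuous_real) (rule continuous_on_const)
    fix s assume s: "s \<in> {0..T}"
    have "\<bar>snd (\<beta> s) - fst (\<beta> s)\<bar> \<le> 1" using beta_bounds[OF s] by auto
    then have "\<bar>snd (\<beta> s) - fst (\<beta> s)\<bar> * \<bar>m s\<bar> \<le> 1 * B" using B[OF s] by (intro mult_mono) auto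
    moreover have "\<bar>- d s + (snd (\<beta> s) - fst (\<beta> s)) * m s\<bar> \<le> \<bar>- d s\<bar> + \<bar>(snd (\<beta> s) - fst (\<beta> s)) * m s\<bar>"
      by (rule abs_triangle_ineq)
    ultimately show "norm (- d s + (snd (\<beta> s) - fst (\<beta> s)) * m s) \<le> B2 + B"
      using B2[OF s] by (simp only: real_norm_def abs_minus_cancel abs_mult)
  qed
qed


lemma gm_absint_t: "t \<in> {0..T} \<Longrightarrow> (\<lambda>s. - b s * m s) absolutely_integrable_on {0..t}"
  using absolutely_integrable_on_subcbox[OF gm_absint, of 0 t] by auto

lemma gd_absint_t: "t \<in> {0..T} \<Longrightarrow> (\<lambda>s. - d s + (snd (\<beta> s) - fst (\<beta> s)) * m s) absolutely_integrable_on {0..t}"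
  using absolutely_integrable_on_subcbox[OF gd_absint, of 0 t] by auto

lemma m_repr: "s \<in> {0..T} \<Longrightarrow> m s = m 0 + integral {0..s} (\<lambda>s. - b s * m s)"
  using integral_unique[OF m_int] m_0 by simp

lemma d_repr: "s \<in> {0..T} \<Longrightarrow> d s = d 0 + integral {0..s} (\<lambda>s. - d s + (snd (\<beta> s) - fst (\<beta> s)) * m s)"
  using integral_unique[OF d_int] d_0 by simp

lemma w_int: "t \<in> {0..T} \<Longrightarrow> ((\<lambda>s. exp (s/2) * (1/2 - b s) * m s) has_integral (exp (t/2) * m t - m0)) {0..t}"
proof -
  assume t: "t \<in> {0..T}"
  have "((\<lambda>s. exp (s/2) / 2 * m s + exp (s/2) * (- b s * m s)) has_integral (exp (t/2) * m t - exp (0/2) * m 0)) {0..t}"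
  proof (rule PR)
    show "0 \<le> t" using t by auto
    show "(\<lambda>s. - b s * m s) absolutely_integrable_on {0..t}" by (rule gm_absint_t[OF t])
    show "\<And>s. s \<in> {0..t} \<Longrightarrow> m s = m 0 + integral {0..s} (\<lambda>s. - b s * m s)" using t by (intro m_repr) auto
    show "\<And>x. ((\<lambda>s. exp (s/2)) has_real_derivative exp (x/2) / 2) (at x)" by (auto intro!: derivative_eq_intros)
    show "continuous_on UNIV (\<lambda>s::real. exp (s/2) / 2)" by (intro continuous_intros) auto
  qed
  then show ?thesis by (rule hi_eq) (auto simp: m_0 algebra_simps)
qed

lemma z_int: "t \<in> {0..T} \<Longrightarrow> ((\<lambda>s. exp s * (1 - b s) * m s) has_integral (exp t * m t - m0)) {0..t}"
proof -
  assume t: "t \<in> {0..T}"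
  have "((\<lambda>s. exp s * m s + exp s * (- b s * m s)) has_integral (exp t * m t - exp 0 * m 0)) {0..t}"
  proof (rule PR)
    show "0 \<le> t" using t by auto
    show "(\<lambda>s. - b s * m s) absolutely_integrable_on {0..t}" by (rule gm_absint_t[OF t])
    show "\<And>s. s \<in> {0..t} \<Longrightarrow> m s = m 0 + integral {0..s} (\<lambda>s. - b s * m s)" using t by (intro m_repr) auto
    show "\<And>x. (exp has_real_derivative exp x) (at x)" by (auto intro!: derivative_eq_intros)
    show "continuous_on UNIV (exp :: real \<Rightarrow> real)" using continuous_on_exp[OF continuous_on_id] by simp
  qed
  then show ?thesis by (rule hi_eq) (auto simp: m_0 algebra_simps)
qed

lemma dz_int: "t \<in> {0..T} \<Longrightarrow> ((\<lambda>s. exp s * (snd (\<beta> s) - fst (\<beta> s)) * m s) has_integral (exp t * d t - d0)) {0..t}"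
proof -
  assume t: "t \<in> {0..T}"
  have "((\<lambda>s. exp s * d s + exp s * (- d s + (snd (\<beta> s) - fst (\<beta> s)) * m s)) has_integral (exp t * d t - exp 0 * d 0)) {0..t}"
  proof (rule PR)
    show "0 \<le> t" using t by auto
    show "(\<lambda>s. - d s + (snd (\<beta> s) - fst (\<beta> s)) * m s) absolutely_integrable_on {0..t}" by (rule gd_absint_t[OF t])
    show "\<And>s. s \<in> {0..t} \<Longrightarrow> d s = d 0 + integral {0..s} (\<lambda>s. - d s + (snd (\<beta> s) - fst (\<beta> s)) * m s)"
      using t by (intro d_repr) auto
    show "\<And>x. (exp has_real_derivative exp x) (at x)" by (auto intro!: derivative_eq_intros)
    show "continuous_on UNIV (exp :: real \<Rightarrow> real)" using continuous_on_exp[OF continuous_on_id] by simp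
  qed
  then show ?thesis by (rule hi_eq) (auto simp: d_0 algebra_simps)
qed

lemma m_pos: "t \<in> {0..T} \<Longrightarrow> m t > 0"
proof (rule ccontr)
  assume t: "t \<in> {0..T}" and nt: "\<not> m t > 0"
  define S where "S = {0..T} \<inter> m -` {..0}"
  have clS: "closed S" unfolding S_def by (rule continuous_closed_preimage[OF m_cont]) auto
  have tS: "t \<in> S" using t nt by (auto simp: S_def)
  have bS: "bdd_below S" by (auto simp: S_def bdd_below_def)
  define t1 where "t1 = Inf S"
  have t1S: "t1 \<in> S" unfolding t1_def using closed_contains_Inf[OF _ bS clS] tS by blast
  have t1_le: "\<And>s. s \<in> S \<Longrightarrow> t1 \<le> s" unfolding t1_def using bS by (simp add: cInf_lower)
  have t1T: "t1 \<in> {0..T}" and mt1: "m t1 \<le> 0" using t1S by (auto simp: S_def)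
  have "\<exists>x. 0 \<le> x \<and> x \<le> t1 \<and> m x = 0"
    using m_0 m0_pos mt1 t1T by (intro IVT2' continuous_on_subset[OF m_cont]) auto
  then obtain x where x: "0 \<le> x" "x \<le> t1" "m x = 0" by blast
  then have "x \<in> S" using t1T by (auto simp: S_def)
  then have "x = t1" using t1_le x by force
  then have mt1z: "m t1 = 0" using x by simp
  have nn: "m s \<ge> 0" if s: "s \<in> {0..t1}" for s
  proof (rule ccontr)
    assume "\<not> m s \<ge> 0"
    then have "s \<in> S" using s t1T by (auto simp: S_def)
    then have "t1 \<le> s" by (rule t1_le)
    then have "s = t1" using s by auto
    then show False using mt1z \<open>\<not> m s \<ge> 0\<close> by simp
  qed
  have "0 \<le> exp (t1/2) * m t1 - m0"
  proof (rule has_integral_nonneg[OF w_int[OF t1T]])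
    fix s assume s: "s \<in> {0..t1}"
    then have "s \<in> {0..T}" using t1T by auto
    then show "0 \<le> exp (s/2) * (1/2 - b s) * m s" using b_bounds nn[OF s] by auto
  qed
  then show False using mt1z m0_pos by simp
qed

lemma m_nonneg: "t \<in> {0..T} \<Longrightarrow> m t \<ge> 0"
  using m_pos less_imp_le by blast

lemma m_le: "t \<in> {0..T} \<Longrightarrow> m t \<le> m0"
proof -
  assume t: "t \<in> {0..T}"
  have "((\<lambda>s. b s * m s) has_integral (m0 - m t)) {0..t}"
    using has_integral_neg[OF m_int[OF t]] by simp
  then have "0 \<le> m0 - m t"
  proof (rule has_integral_nonneg)
    fix s assume s: "s \<in> {0..t}"
    then have "s \<in> {0..T}" using t by auto
    then show "0 \<le> b s * m s" using b_bounds[of s] m_pos[of s] by (auto intro!: mult_nonneg_nonneg)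
  qed
  then show ?thesis by simp
qed

lemma w_mono: "s \<in> {0..T} \<Longrightarrow> t \<in> {0..T} \<Longrightarrow> s \<le> t \<Longrightarrow> exp (s/2) * m s \<le> exp (t/2) * m t"
proof -
  assume s: "s \<in> {0..T}" and t: "t \<in> {0..T}" and st: "s \<le> t"
  define f where "f r = exp (r/2) * (1/2 - b r) * m r" for r
  have it: "f integrable_on {0..t}" unfolding f_def using w_int[OF t] by (rule has_integral_integrable)
  have "integral {0..s} f + integral {s..t} f = integral {0..t} f"
    using Henstock_Kurzweil_Integration.integral_combine[OF _ st it] s by auto
  moreover have "integral {0..t} f = exp (t/2) * m t - m0" unfolding f_def using w_int[OF t] by (rule integral_unique)
  moreover have "integral {0..s} f = exp (s/2) * m s - m0" unfolding f_def using w_int[OF s] by (rule integral_unique)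
  moreover have "integral {s..t} f \<ge> 0"
  proof (rule integral_nonneg)
    show "f integrable_on {s..t}" using s by (intro integrable_on_subinterval[OF it]) auto
    fix r assume r: "r \<in> {s..t}"
    then have "r \<in> {0..T}" using s t by auto
    then show "0 \<le> f r" unfolding f_def using b_bounds[of r] m_pos[of r] by (auto intro!: mult_nonneg_nonneg)
  qed
  ultimately show ?thesis by linarith
qed


definition "E = exp (T/2)"
definition "X = exp (T/2) * m T / m0"
definition "\<tau> = 2 * ln X"
definition "z s = exp s * m s"
definition "sl1 = integral {0..T} (\<lambda>s. exp s * (2 * snd (\<beta> s)) * m s)"
definition "sl2 = integral {0..\<tau>} (\<lambda>s. m0 * exp s - z s)"
definition "sl3 = integral {\<tau>..T} (\<lambda>s. m0 * X * exp (s/2) - z s)"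

lemma exp_half: "exp (s::real) = exp (s/2) * exp (s/2)"
  by (metis exp_add field_sum_of_halves)

lemma T_in: "T \<in> {0..T}" and zero_in: "0 \<in> {0..T}" using T_pos by auto

lemma E_gt1: "E > 1" unfolding E_def using T_pos by simp

lemma X_ge1: "X \<ge> 1"
  using w_mono[OF zero_in T_in] T_pos m0_pos m_0 by (simp add: X_def)

lemma X_leE: "X \<le> E"
proof -
  have "exp (T/2) * m T \<le> exp (T/2) * m0" using m_le[OF T_in] by simp
  then show ?thesis using m0_pos by (simp add: X_def E_def divide_le_eq)
qed

lemma exp_tau2: "exp (\<tau>/2) = X" unfolding \<tau>_def using X_ge1 by simp
lemma exp_tau: "exp \<tau> = X^2"
proof -
  have "exp \<tau> = exp (\<tau>/2) * exp (\<tau>/2)" by (rule exp_half)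
  then show ?thesis using exp_tau2 by (simp add: power2_eq_square)
qed

lemma tau_in: "\<tau> \<in> {0..T}"
proof -
  have "0 \<le> ln X" using X_ge1 by simp
  moreover have "ln X \<le> ln (exp (T/2))" using X_leE X_ge1 unfolding E_def by (subst ln_le_cancel_iff) auto
  then have "ln X \<le> T/2" by simp
  ultimately show ?thesis by (simp add: \<tau>_def)
qed

lemma zT: "exp T * m T = m0 * X * E"
proof -
  have "exp T = exp (T/2) * exp (T/2)" by (rule exp_half)
  then show ?thesis using m0_pos by (simp add: X_def E_def)
qed

lemma S_T: "exp T * (fst (\<eta> T) + snd (\<eta> T)) = 2 * m0 * X * E"
  using zT by (simp add: m_def mean_def algebra_simps)

lemma z_cont: "continuous_on {0..T} z"
  unfolding z_def by (intro continuous_intros m_cont)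

lemma z_le1: "s \<in> {0..T} \<Longrightarrow> z s \<le> m0 * exp s"
  using m_le[of s] by (simp add: z_def)

lemma z_le2: "s \<in> {0..T} \<Longrightarrow> z s \<le> m0 * X * exp (s/2)"
proof -
  assume s: "s \<in> {0..T}"
  have "exp (s/2) * m s \<le> exp (T/2) * m T" using w_mono[OF s T_in] s by auto
  also have "\<dots> = m0 * X" using m0_pos by (simp add: X_def)
  finally have "exp (s/2) * (exp (s/2) * m s) \<le> exp (s/2) * (m0 * X)" by simp
  moreover have "exp s = exp (s/2) * exp (s/2)" by (rule exp_half)
  ultimately show ?thesis by (simp add: z_def algebra_simps)
qed

lemma sl1_nonneg: "sl1 \<ge> 0"
proof -
  have i1: "(\<lambda>s. exp s * (snd (\<beta> s) - fst (\<beta> s)) * m s) integrable_on {0..T}"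
    using dz_int[OF T_in] by (rule has_integral_integrable)
  have i2: "(\<lambda>s. exp s * b s * m s) integrable_on {0..T}"
  proof -
    have A: "(\<lambda>s. exp s * (1 - b s) * m s) integrable_on {0..T}" using z_int[OF T_in] by (rule has_integral_integrable)
    have B: "z integrable_on {0..T}" by (rule integrable_continuous_real[OF z_cont])
    have "(\<lambda>s. z s - exp s * (1 - b s) * m s) integrable_on {0..T}" by (rule integrable_diff[OF B A])
    then show ?thesis by (rule integrable_eq) (simp add: z_def algebra_simps)
  qed
  show ?thesis unfolding sl1_def
  proof (rule integral_nonneg)
    have "(\<lambda>s. exp s * (snd (\<beta> s) - fst (\<beta> s)) * m s + 2 * (exp s * b s * m s)) integrable_on {0..T}"
      by (intro integrable_add i1) (simp add: i2)
    then show "(\<lambda>s. exp s * (2 * snd (\<beta> s)) * m s) integrable_on {0..T}"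
      by (rule integrable_eq) (simp add: b_def algebra_simps)
    fix s assume s: "s \<in> {0..T}"
    then show "0 \<le> exp s * (2 * snd (\<beta> s)) * m s" using beta_bounds[OF s] m_pos[OF s] by simp
  qed
qed

lemma i_z: "z integrable_on {a..c}" if "{a..c} \<subseteq> {0..T}" for a c
  by (rule integrable_continuous_real) (rule continuous_on_subset[OF z_cont that])

lemma sl2_has: "((\<lambda>s. m0 * exp s - z s) has_integral sl2) {0..\<tau>}"
proof -
  have "(\<lambda>s. m0 * exp s) integrable_on {0..\<tau>}" by (intro integrable_continuous_real continuous_intros)
  moreover have "z integrable_on {0..\<tau>}" using tau_in by (intro i_z) auto
  ultimately show ?thesis unfolding sl2_def by (intro integrable_integral integrable_diff)
qed

lemma sl3_has: "((\<lambda>s. m0 * X * exp (s/2) - z s) has_integral sl3) {\<tau>..T}"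
proof -
  have "(\<lambda>s. m0 * X * exp (s/2)) integrable_on {\<tau>..T}" by (intro integrable_continuous_real continuous_intros) auto
  moreover have "z integrable_on {\<tau>..T}" using tau_in by (intro i_z) auto
  ultimately show ?thesis unfolding sl3_def by (intro integrable_integral integrable_diff)
qed

lemma sl2_nonneg: "sl2 \<ge> 0"
  using sl2_has by (rule has_integral_nonneg) (use tau_in z_le1 in auto)

lemma sl3_nonneg: "sl3 \<ge> 0"
  using sl3_has by (rule has_integral_nonneg) (use tau_in z_le2 in auto)


definition "Dv = d0 + 2 * (m0 * X^2) - 2 * (m0 * X * E)"

lemma sl1_has: "((\<lambda>s. exp s * (2 * snd (\<beta> s)) * m s) has_integral
   ((exp T * d T - d0) + 2 * (integral {0..T} z - (exp T * m T - m0)))) {0..T}"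
proof -
  have HZ: "(z has_integral integral {0..T} z) {0..T}"
    by (rule integrable_integral[OF integrable_continuous_real[OF z_cont]])
  have "((\<lambda>s. exp s * (snd (\<beta> s) - fst (\<beta> s)) * m s + 2 * (z s - exp s * (1 - b s) * m s)) has_integral
     ((exp T * d T - d0) + 2 * (integral {0..T} z - (exp T * m T - m0)))) {0..T}"
    by (intro has_integral_add has_integral_mult_right has_integral_diff dz_int T_in HZ z_int)
  then show ?thesis by (rule hi_eq) (auto simp: z_def b_def algebra_simps)
qed

lemma sl1_val: "sl1 = (exp T * d T - d0) + 2 * (integral {0..T} z - (exp T * m T - m0))"
  unfolding sl1_def using sl1_has by (rule integral_unique)

lemma D_identity: "exp T * d T = Dv + sl1 + 2 * sl2 + 2 * sl3"
proof -
  have c: "integral {0..\<tau>} z + integral {\<tau>..T} z = integral {0..T} z"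
    using Henstock_Kurzweil_Integration.integral_combine[of 0 \<tau> T z] tau_in
      integrable_continuous_real[OF z_cont] by auto
  have f1: "((\<lambda>s. m0 * exp s) has_integral (m0 * exp \<tau> - m0 * exp 0)) {0..\<tau>}"
    using tau_in by (intro ftc_real) (auto intro!: derivative_eq_intros)
  have "((\<lambda>s. m0 * exp s - (m0 * exp s - z s)) has_integral ((m0 * exp \<tau> - m0 * exp 0) - sl2)) {0..\<tau>}"
    by (intro has_integral_diff f1 sl2_has)
  then have "integral {0..\<tau>} z = (m0 * exp \<tau> - m0 * exp 0) - sl2" by (simp add: integral_unique)
  then have i1: "integral {0..\<tau>} z = m0 * X^2 - m0 - sl2" using exp_tau by simp
  have f2: "((\<lambda>s. m0 * X * exp (s/2)) has_integral (2 * m0 * X * exp (T/2) - 2 * m0 * X * exp (\<tau>/2))) {\<tau>..T}"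
    using tau_in by (intro ftc_real) (auto intro!: derivative_eq_intros)
  have "((\<lambda>s. m0 * X * exp (s/2) - (m0 * X * exp (s/2) - z s)) has_integral
      ((2 * m0 * X * exp (T/2) - 2 * m0 * X * exp (\<tau>/2)) - sl3)) {\<tau>..T}"
    by (intro has_integral_diff f2 sl3_has)
  then have "integral {\<tau>..T} z = (2 * m0 * X * exp (T/2) - 2 * m0 * X * exp (\<tau>/2)) - sl3" by (simp add: integral_unique)
  then have i2: "integral {\<tau>..T} z = 2 * (m0 * X * E) - 2 * (m0 * X^2) - sl3"
    using exp_tau2 by (simp add: E_def power2_eq_square)
  show ?thesis using c i1 i2 sl1_val zT unfolding Dv_def by (simp add: algebra_simps)
qed

lemma X1_cons:
  assumes X1: "X = 1"
  shows "AE t in lborel. t \<in> {0..T} \<longrightarrow> fst (\<beta> t) + snd (\<beta> t) = 1"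
    and "\<forall>t\<in>{0..T}. m t = m0 * exp (- t / 2)"
proof -
  have wT: "exp (T/2) * m T = m0" using X1 m0_pos by (simp add: X_def)
  have "((\<lambda>s. exp (s/2) * (1/2 - b s) * m s) has_integral 0) {0..T}"
    using w_int[OF T_in] wT by simp
  then have "AE s in lborel. s \<in> {0..T} \<longrightarrow> exp (s/2) * (1/2 - b s) * m s = 0"
    by (rule hk_zero_AE) (use b_bounds m_nonneg in \<open>auto intro!: mult_nonneg_nonneg\<close>)
  then show "AE t in lborel. t \<in> {0..T} \<longrightarrow> fst (\<beta> t) + snd (\<beta> t) = 1"
  proof eventually_elim
    case (elim s)
    show ?case
    proof
      assume s: "s \<in> {0..T}"
      then have "exp (s/2) * (1/2 - b s) * m s = 0" using elim by blast
      then have "1/2 - b s = 0" using m_pos[OF s] by simp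
      then show "fst (\<beta> s) + snd (\<beta> s) = 1" by (simp add: b_def)
    qed
  qed
  show "\<forall>t\<in>{0..T}. m t = m0 * exp (- t / 2)"
  proof
    fix t assume t: "t \<in> {0..T}"
    have "m0 \<le> exp (t/2) * m t" using w_mono[OF zero_in t] t m_0 by simp
    moreover have "exp (t/2) * m t \<le> m0" using w_mono[OF t T_in] t wT by simp
    ultimately have "exp (t/2) * m t = m0" by simp
    then have "m t = m0 / exp (t/2)" by (simp add: field_simps)
    then show "m t = m0 * exp (- t / 2)" by (simp add: exp_minus field_simps)
  qed
qed

lemma sl1_cons:
  assumes "sl1 = 0"
  shows "AE t in lborel. t \<in> {0..T} \<longrightarrow> snd (\<beta> t) = 0"
proof -
  have "((\<lambda>s. exp s * (2 * snd (\<beta> s)) * m s) has_integral 0) {0..T}"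
    using sl1_has sl1_val assms by simp
  then have "AE s in lborel. s \<in> {0..T} \<longrightarrow> exp s * (2 * snd (\<beta> s)) * m s = 0"
    by (rule hk_zero_AE) (use beta_bounds m_nonneg in \<open>auto intro!: mult_nonneg_nonneg\<close>)
  then show ?thesis
  proof eventually_elim
    case (elim s)
    show ?case
    proof
      assume s: "s \<in> {0..T}"
      then have "exp s * (2 * snd (\<beta> s)) * m s = 0" using elim by blast
      then show "snd (\<beta> s) = 0" using m_pos[OF s] by simp
    qed
  qed
qed

lemma sl2_cons:
  assumes "sl2 = 0"
  shows "AE t in lborel. t \<in> {0..\<tau>} \<longrightarrow> fst (\<beta> t) = 0 \<and> snd (\<beta> t) = 0"
    and "AE t in lborel. t \<in> {\<tau>..T} \<longrightarrow> fst (\<beta> t) + snd (\<beta> t) = 1"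
proof -
  have ztau: "z \<tau> = m0 * exp \<tau>"
  proof (cases "\<tau> = 0")
    case True then show ?thesis using m_0 by (simp add: z_def)
  next
    case False
    then have tp: "\<tau> > 0" using tau_in by auto
    have "(\<lambda>s. m0 * exp s - z s) \<tau> = 0"
    proof (rule has_integral_0_cbox_imp_0[of 0 \<tau> "\<lambda>s. m0 * exp s - z s" \<tau>])
      show "continuous_on (cbox 0 \<tau>) (\<lambda>s. m0 * exp s - z s)"
        using tau_in by (auto intro!: continuous_intros continuous_on_subset[OF z_cont])
      show "\<And>x. x \<in> box 0 \<tau> \<Longrightarrow> 0 \<le> m0 * exp x - z x" using z_le1 tau_in by (auto simp: box_real)
      show "((\<lambda>s. m0 * exp s - z s) has_integral 0) (cbox 0 \<tau>)" using sl2_has assms by simp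
      show "box 0 \<tau> \<noteq> {}" using tp by simp
      show "\<tau> \<in> cbox 0 \<tau>" using tp by simp
    qed
    then show ?thesis by simp
  qed
  then have mtau: "m \<tau> = m0" by (simp add: z_def)
  have "((\<lambda>s. b s * m s) has_integral 0) {0..\<tau>}"
    using has_integral_neg[OF m_int[OF tau_in]] mtau by simp
  then have "AE s in lborel. s \<in> {0..\<tau>} \<longrightarrow> b s * m s = 0"
    by (rule hk_zero_AE) (use b_bounds m_nonneg tau_in in \<open>auto intro!: mult_nonneg_nonneg\<close>)
  then show "AE t in lborel. t \<in> {0..\<tau>} \<longrightarrow> fst (\<beta> t) = 0 \<and> snd (\<beta> t) = 0"
  proof eventually_elim
    case (elim s)
    show ?case
    proof
      assume s: "s \<in> {0..\<tau>}"
      then have sT: "s \<in> {0..T}" using tau_in by auto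
      have "b s * m s = 0" using elim s by blast
      then have "b s = 0" using m_pos[OF sT] by simp
      then show "fst (\<beta> s) = 0 \<and> snd (\<beta> s) = 0" using beta_bounds[OF sT] by (simp add: b_def)
    qed
  qed
  define f where "f s = exp (s/2) * (1/2 - b s) * m s" for s
  have it: "f integrable_on {0..T}" unfolding f_def using w_int[OF T_in] by (rule has_integral_integrable)
  have "integral {0..\<tau>} f + integral {\<tau>..T} f = integral {0..T} f"
    using Henstock_Kurzweil_Integration.integral_combine[OF _ _ it] tau_in by auto
  moreover have "integral {0..T} f = exp (T/2) * m T - m0" unfolding f_def using w_int[OF T_in] by (rule integral_unique)
  moreover have "integral {0..\<tau>} f = exp (\<tau>/2) * m \<tau> - m0" unfolding f_def using w_int[OF tau_in] by (rule integral_unique)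
  moreover have "exp (\<tau>/2) * m \<tau> = exp (T/2) * m T" using exp_tau2 mtau m0_pos by (simp add: X_def)
  ultimately have "integral {\<tau>..T} f = 0" by simp
  moreover have "f integrable_on {\<tau>..T}" using tau_in by (intro integrable_on_subinterval[OF it]) auto
  ultimately have "(f has_integral 0) {\<tau>..T}" by (metis integrable_integral)
  then have "AE s in lborel. s \<in> {\<tau>..T} \<longrightarrow> f s = 0"
    by (rule hk_zero_AE) (use b_bounds m_nonneg tau_in in \<open>auto simp: f_def intro!: mult_nonneg_nonneg\<close>)
  then show "AE t in lborel. t \<in> {\<tau>..T} \<longrightarrow> fst (\<beta> t) + snd (\<beta> t) = 1"
  proof eventually_elim
    case (elim s)
    show ?case
    proof
      assume s: "s \<in> {\<tau>..T}"
      then have sT: "s \<in> {0..T}" using tau_in by auto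
      have "f s = 0" using elim s by blast
      then have "1/2 - b s = 0" using m_pos[OF sT] by (simp add: f_def)
      then show "fst (\<beta> s) + snd (\<beta> s) = 1" by (simp add: b_def)
    qed
  qed
qed

end

lemma pair_deriv:
  fixes f g :: "real \<Rightarrow> real"
  assumes "(f has_real_derivative f') (at s)" "(g has_real_derivative g') (at s)"
  shows "((\<lambda>s. (f s, g s)) has_vector_derivative (f', g')) (at s)"
  by (rule has_vector_derivative_Pair) (use assms in \<open>simp_all add: has_real_derivative_iff_has_vector_derivative[symmetric]\<close>)

lemma piecewise_traj:
  fixes a1 a2 :: "real \<times> real" and P1 P2 :: "real \<Rightarrow> real \<times> real"
  assumes \<tau>: "0 \<le> \<tau>" "\<tau> \<le> T"
    and d1: "\<And>s. (P1 has_vector_derivative dyn a1 (P1 s)) (at s)"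
    and d2: "\<And>s. (P2 has_vector_derivative dyn a2 (P2 s)) (at s)"
    and eq: "P1 \<tau> = P2 \<tau>"
  shows "is_traj T (\<lambda>t. if t < \<tau> then a1 else a2) (P1 0) (\<lambda>t. if t \<le> \<tau> then P1 t else P2 t)"
  unfolding is_traj_def
proof (intro conjI ballI)
  show "(if 0 \<le> \<tau> then P1 0 else P2 0) = P1 0" using \<tau> by simp
  fix t assume t: "t \<in> {0..T}"
  let ?f = "\<lambda>s. dyn (if s < \<tau> then a1 else a2) (if s \<le> \<tau> then P1 s else P2 s)"
  have F1: "((\<lambda>s. dyn a1 (P1 s)) has_integral (P1 u - P1 0)) {0..u}" if "0 \<le> u" for u
    by (rule fundamental_theorem_of_calculus[OF that]) (auto intro: has_vector_derivative_at_within d1)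
  have F2: "((\<lambda>s. dyn a2 (P2 s)) has_integral (P2 u - P2 \<tau>)) {\<tau>..u}" if "\<tau> \<le> u" for u
    by (rule fundamental_theorem_of_calculus[OF that]) (auto intro: has_vector_derivative_at_within d2)
  have G1: "(?f has_integral (P1 u - P1 0)) {0..u}" if "0 \<le> u" "u \<le> \<tau>" for u
    by (rule has_integral_spike_finite[of "{\<tau>}", OF _ _ F1[OF that(1)]]) (use that in auto)
  show "(?f has_integral ((if t \<le> \<tau> then P1 t else P2 t) - (if 0 \<le> \<tau> then P1 0 else P2 0))) {0..t}"
  proof (cases "t \<le> \<tau>")
    case True
    then show ?thesis using G1[of t] t \<tau> by simp
  next
    case False
    have "(?f has_integral (P2 t - P2 \<tau>)) {\<tau>..t}"
      by (rule has_integral_eq[OF _ F2]) (use False eq in auto)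
    then have "(?f has_integral ((P1 \<tau> - P1 0) + (P2 t - P2 \<tau>))) {0..t}"
      using False \<tau> by (intro has_integral_combine[OF _ _ G1]) auto
    then show ?thesis using False \<tau> eq by simp
  qed
qed

lemma pw_U1:
  assumes "0 \<le> fst a1" "fst a1 \<le> 1" "0 \<le> snd a1" "snd a1 \<le> 1" "fst a1 + snd a1 \<le> 1"
    and "0 \<le> fst a2" "fst a2 \<le> 1" "0 \<le> snd a2" "snd a2 \<le> 1" "fst a2 + snd a2 \<le> 1"
  shows "(\<lambda>t::real. if t < \<tau> then a1 else a2) \<in> U1 T"
  unfolding U1_def
proof (intro CollectI conjI ballI)
  have "(\<lambda>t::real. if t < \<tau> then a1 else a2) \<in> borel_measurable borel" by measurable
  then have "(\<lambda>t::real. if t < \<tau> then a1 else a2) \<in> borel_measurable lebesgue"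
    by (intro measurable_completion) simp
  then show "(\<lambda>t::real. if t < \<tau> then a1 else a2) \<in> borel_measurable (restrict_space lebesgue {0..T})"
    by (rule measurable_restrict_space1)
qed (use assms in auto)

definition Dfun :: "real \<times> real \<Rightarrow> real \<Rightarrow> real \<Rightarrow> real" where
  "Dfun x0 E Y = (fst x0 - snd x0) + 2 * (mean x0 * Y^2) - 2 * (mean x0 * Y * E)"

definition Ffun :: "real \<times> real \<Rightarrow> real \<Rightarrow> real \<Rightarrow> real" where
  "Ffun x0 E Y = (2 * (mean x0 * Y * E))^2 + (Dfun x0 E Y)^2"

lemma exp_half': "exp (s::real) = exp (s/2) * exp (s/2)"
  by (metis exp_add field_sum_of_halves)

lemma exp_facts:
  fixes T :: real
  shows "exp (2*T) = exp (T/2)^4" "exp (-T) = 1 / exp (T/2)^2" "exp (-T/2) = 1 / exp (T/2)"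
proof -
  have "exp (2*T) = exp (4 * (T/2))" by simp
  also have "\<dots> = exp (T/2)^4" by (rule exp_of_nat_mult[of 4, simplified])
  finally show "exp (2*T) = exp (T/2)^4" .
  have "exp T = exp (T/2)^2" using exp_half'[of T] by (simp add: power2_eq_square)
  then show "exp (-T) = 1 / exp (T/2)^2" by (simp add: exp_minus field_simps)
  show "exp (-T/2) = 1 / exp (T/2)" by (simp add: exp_minus field_simps)
qed

lemma comp_bb:
  assumes T: "T > 0" and m0: "mean x0 > 0" and Y: "1 \<le> Y" "Y \<le> exp (T/2)"
  shows "\<exists>\<beta> \<eta>. \<beta> \<in> U1 T \<and> is_traj T \<beta> x0 \<eta> \<and> 4 * exp (2*T) * cost (\<eta> T) = Ffun x0 (exp (T/2)) Y"
proof -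
  define p where "p = fst x0"
  define q where "q = snd x0"
  define m0 where "m0 = mean x0"
  have q_eq: "q = 2 * m0 - p" by (simp add: p_def q_def m0_def mean_def field_simps)
  define K where "K = m0 * Y^2 + p - m0"
  define \<tau> where "\<tau> = 2 * ln Y"
  define P1 where "P1 s = (m0 + (p - m0) * exp (-s), m0 + (q - m0) * exp (-s))" for s
  define P2 where "P2 s = (K * exp (-s), 2 * m0 * Y * exp (-s/2) - K * exp (-s))" for s
  have Ypos: "Y > 0" using Y by simp
  have tau_in: "0 \<le> \<tau>" "\<tau> \<le> T"
  proof -
    show "0 \<le> \<tau>" using Y by (simp add: \<tau>_def)
    have "ln Y \<le> ln (exp (T/2))" using Y Ypos by (subst ln_le_cancel_iff) auto
    then show "\<tau> \<le> T" by (simp add: \<tau>_def)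
  qed
  have e1: "exp (- \<tau>/2) = 1 / Y" using Ypos by (simp add: \<tau>_def exp_minus inverse_eq_divide)
  have e2: "exp (- \<tau>) = 1 / Y^2"
  proof -
    have "exp (- \<tau>) = exp (- \<tau>/2) * exp (- \<tau>/2)" using exp_half'[of "- \<tau>"] by simp
    then show ?thesis using e1 by (simp add: power2_eq_square)
  qed
  have d1: "(P1 has_vector_derivative dyn (0,0) (P1 s)) (at s)" for s
  proof -
    have "(P1 has_vector_derivative (- (p - m0) * exp (-s), - (q - m0) * exp (-s))) (at s)"
      unfolding P1_def by (intro pair_deriv) (auto intro!: derivative_eq_intros simp: algebra_simps)
    moreover have "dyn (0,0) (P1 s) = (- (p - m0) * exp (-s), - (q - m0) * exp (-s))"
      by (simp add: dyn_def mean_def P1_def q_eq algebra_simps)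
    ultimately show ?thesis by simp
  qed
  have d2: "(P2 has_vector_derivative dyn (1,0) (P2 s)) (at s)" for s
  proof -
    have "(P2 has_vector_derivative (- K * exp (-s), - (m0 * Y * exp (-s/2)) + K * exp (-s))) (at s)"
      unfolding P2_def by (intro pair_deriv) (auto intro!: derivative_eq_intros simp: algebra_simps)
    moreover have "dyn (1,0) (P2 s) = (- K * exp (-s), - (m0 * Y * exp (-s/2)) + K * exp (-s))"
      by (simp add: dyn_def mean_def P2_def algebra_simps)
    ultimately show ?thesis by simp
  qed
  have eq: "P1 \<tau> = P2 \<tau>"
  proof -
    have e1': "exp (- (\<tau>/2)) = 1 / Y" using e1 by simp
    show ?thesis using Ypos unfolding P1_def P2_def
      by (simp add: e1 e1' e2 K_def q_eq field_simps power2_eq_square)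
  qed
  define \<beta> where "\<beta> = (\<lambda>t::real. if t < \<tau> then (0::real, 0::real) else (1, 0))"
  define \<eta> where "\<eta> = (\<lambda>t. if t \<le> \<tau> then P1 t else P2 t)"
  have tr: "is_traj T \<beta> (P1 0) \<eta>"
    unfolding \<beta>_def \<eta>_def by (rule piecewise_traj[OF tau_in d1 d2 eq])
  have P10: "P1 0 = x0" by (simp add: P1_def p_def q_def)
  have U: "\<beta> \<in> U1 T" unfolding \<beta>_def by (rule pw_U1) auto
  have etaT: "\<eta> T = P2 T" using eq tau_in by (auto simp: \<eta>_def)
  define E where "E = exp (T/2)"
  have Epos: "E > 0" by (simp add: E_def)
  have eT: "exp (- T) = 1 / E^2" "exp (- (T/2)) = 1 / E" "exp (2*T) = E^4"
    using exp_facts[of T] by (simp_all add: E_def)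
  have P2T: "P2 T = (K / E^2, 2 * m0 * Y / E - K / E^2)"
    unfolding P2_def using eT by simp
  have Dfe: "Dfun x0 E Y = 2 * K - 2 * (m0 * Y * E)"
    by (simp add: Dfun_def K_def p_def[symmetric] q_def[symmetric] m0_def[symmetric] q_eq)
  have "4 * exp (2*T) * cost (\<eta> T) = Ffun x0 E Y"
    unfolding etaT P2T cost_def Ffun_def Dfe eT(3) m0_def[symmetric]
    using Epos by (simp add: field_simps power2_eq_square eval_nat_numeral)
  then show ?thesis using tr U P10 by (auto simp: E_def)
qed


lemma comp_i:
  assumes T: "T > 0" and m0p: "mean x0 > 0" and ord: "fst x0 > snd x0"
    and t0: "2 * ln (fst x0 / mean x0) \<le> T"
  shows "(\<lambda>t. if t < 2 * ln (fst x0 / mean x0) then (1::real, 0::real) else (1/2, 1/2)) \<in> U1 T \<and>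
    (\<exists>\<eta>. is_traj T (\<lambda>t. if t < 2 * ln (fst x0 / mean x0) then (1::real, 0::real) else (1/2, 1/2)) x0 \<eta> \<and>
        4 * exp (2*T) * cost (\<eta> T) = (2 * (mean x0 * exp (T/2)))^2)"
proof -
  define p where "p = fst x0"
  define q where "q = snd x0"
  define m0 where "m0 = mean x0"
  have q_eq: "q = 2 * m0 - p" by (simp add: p_def q_def m0_def mean_def field_simps)
  have m0pos: "m0 > 0" using m0p by (simp add: m0_def)
  have pm0: "p > m0" using ord q_eq by (simp add: p_def q_def)
  have ppos: "p > 0" using pm0 m0pos by simp
  define \<tau> where "\<tau> = 2 * ln (p / m0)"
  have tau_in: "0 \<le> \<tau>" "\<tau> \<le> T"
    using pm0 m0pos t0 by (auto simp: \<tau>_def p_def m0_def)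
  have e1: "exp (- (\<tau>/2)) = m0 / p" using ppos m0pos by (simp add: \<tau>_def exp_minus inverse_eq_divide)
  have e2: "exp (- \<tau>) = (m0 / p)^2"
  proof -
    have "exp (- \<tau>) = exp (- (\<tau>/2)) * exp (- (\<tau>/2))" using exp_half'[of "- \<tau>"] by simp
    then show ?thesis using e1 by (simp add: power2_eq_square)
  qed
  define P1 where "P1 s = (p * exp (-s), 2 * m0 * exp (-s/2) - p * exp (-s))" for s
  define P2 where "P2 s = (m0 * exp (-s/2), m0 * exp (-s/2))" for s
  have d1: "(P1 has_vector_derivative dyn (1,0) (P1 s)) (at s)" for s
  proof -
    have "(P1 has_vector_derivative (- p * exp (-s), - (m0 * exp (-s/2)) + p * exp (-s))) (at s)"
      unfolding P1_def by (intro pair_deriv) (auto intro!: derivative_eq_intros simp: algebra_simps)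
    moreover have "dyn (1,0) (P1 s) = (- p * exp (-s), - (m0 * exp (-s/2)) + p * exp (-s))"
      by (simp add: dyn_def mean_def P1_def algebra_simps)
    ultimately show ?thesis by simp
  qed
  have d2: "(P2 has_vector_derivative dyn (1/2,1/2) (P2 s)) (at s)" for s
  proof -
    have "(P2 has_vector_derivative (- (m0 * exp (-s/2)) / 2, - (m0 * exp (-s/2)) / 2)) (at s)"
      unfolding P2_def by (intro pair_deriv) (auto intro!: derivative_eq_intros simp: algebra_simps)
    moreover have "dyn (1/2,1/2) (P2 s) = (- (m0 * exp (-s/2)) / 2, - (m0 * exp (-s/2)) / 2)"
      by (simp add: dyn_def mean_def P2_def algebra_simps)
    ultimately show ?thesis by simp
  qed
  have eq: "P1 \<tau> = P2 \<tau>"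
    using ppos unfolding P1_def P2_def by (simp add: e1 e2 field_simps power2_eq_square)
  define \<eta> where "\<eta> = (\<lambda>t. if t \<le> \<tau> then P1 t else P2 t)"
  have tr: "is_traj T (\<lambda>t. if t < \<tau> then (1::real, 0::real) else (1/2, 1/2)) (P1 0) \<eta>"
    unfolding \<eta>_def by (rule piecewise_traj[OF tau_in d1 d2 eq])
  have P10: "P1 0 = x0" unfolding P1_def by (simp add: q_eq[symmetric]) (simp add: p_def q_def)
  have U: "(\<lambda>t. if t < \<tau> then (1::real, 0::real) else (1/2, 1/2)) \<in> U1 T" by (rule pw_U1) auto
  have etaT: "\<eta> T = P2 T" using eq tau_in by (auto simp: \<eta>_def)
  define E where "E = exp (T/2)"
  have Epos: "E > 0" by (simp add: E_def)
  have eT: "exp (- T) = 1 / E^2" "exp (- (T/2)) = 1 / E" "exp (2*T) = E^4"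
    using exp_facts[of T] by (simp_all add: E_def)
  have P2T: "P2 T = (m0 / E, m0 / E)" unfolding P2_def using eT by simp
  have "4 * exp (2*T) * cost (\<eta> T) = (2 * (m0 * E))^2"
    unfolding etaT P2T cost_def eT(3) using Epos by (simp add: field_simps power2_eq_square eval_nat_numeral)
  then show ?thesis using tr U P10 by (auto simp: E_def \<tau>_def p_def m0_def)
qed

context adm begin

lemma cost4: "4 * exp (2*T) * cost (\<eta> T) = (2 * (m0 * X * E))^2 + (exp T * d T)^2"
proof -
  define a where "a = fst (\<eta> T)"
  define c where "c = snd (\<eta> T)"
  have S: "exp T * (a + c) = 2 * (m0 * X * E)" using S_T by (simp add: a_def c_def)
  have e2: "exp (2*T) = exp T * exp T" by (metis exp_add mult_2)
  have "4 * exp (2*T) * cost (\<eta> T) = (exp T * (a + c))^2 + (exp T * (a - c))^2"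
    unfolding cost_def e2 a_def c_def by (simp add: power2_eq_square algebra_simps)
  then show ?thesis using S by (simp add: d_def a_def c_def)
qed

lemma Dv_Dfun: "Dv = Dfun x0 E X" by (simp add: Dv_def Dfun_def)

lemma LB1: "4 * exp (2*T) * cost (\<eta> T) \<ge> (2 * (m0 * E))^2"
proof -
  have "2 * (m0 * E) \<le> 2 * (m0 * X * E)"
    using X_ge1 m0_pos E_gt1 by (simp add: mult_left_mono mult_right_mono)
  moreover have "0 \<le> 2 * (m0 * E)" using m0_pos E_gt1 by simp
  ultimately have "(2 * (m0 * E))^2 \<le> (2 * (m0 * X * E))^2" by (rule power_mono)
  then show ?thesis using cost4 by (smt (verit) zero_le_power2)
qed

lemma slack_eq: "exp T * d T = Dfun x0 E X + sl1 + 2 * sl2 + 2 * sl3"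
  using D_identity Dv_Dfun by simp

end

lemma Gfun_eq:
  "(fst x0 + mean x0 * (Y^2 - 1))^2 + (snd x0 + mean x0 * (Y^2 - 1) + 2 * mean x0 * Y * (E - Y))^2
   = Ffun x0 E Y / 2"
  unfolding Ffun_def Dfun_def mean_def by (simp add: field_simps power2_eq_square)


theorem theorem1:
  fixes T :: real and x0 :: "real \<times> real"
    and \<alpha> \<xi> :: "real \<Rightarrow> real \<times> real"
  assumes T_pos: "T > 0"
    and init_mean: "mean x0 > 0"
    and init_order: "fst x0 > snd x0"
    and opt: "optimal_pair T x0 \<alpha> \<xi>"
    and ordered: "\<forall>t\<in>{0..T}. fst (\<xi> t) \<ge> snd (\<xi> t)"
  defines "t0 \<equiv> 2 * ln (fst x0 / mean x0)"
  shows
    "(T \<ge> t0 \<longleftrightarrow> fst (\<xi> T) = snd (\<xi> T))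
     \<and> (T \<ge> t0 \<longrightarrow>
          (AE t in lborel. t \<in> {0..T} \<longrightarrow> fst (\<alpha> t) + snd (\<alpha> t) = 1)
        \<and> (\<forall>t\<in>{0..T}. mean (\<xi> t) = mean x0 * exp (- t / 2))
        \<and> optimal_control T x0 (\<lambda>t. if t < t0 then (1, 0) else (1/2, 1/2)))
     \<and> (T < t0 \<longrightarrow>
          (\<exists>X. X \<in> {1..<exp (T/2)}
             \<and> (\<forall>Y\<in>{1..exp (T/2)}.
                  (fst x0 + mean x0 * (X^2 - 1))^2
                    + (snd x0 + mean x0 * (X^2 - 1) + 2 * mean x0 * X * (exp (T/2) - X))^2
                  \<le> (fst x0 + mean x0 * (Y^2 - 1))^2
                    + (snd x0 + mean x0 * (Y^2 - 1) + 2 * mean x0 * Y * (exp (T/2) - Y))^2)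
             \<and> (AE t in lborel. t \<in> {0..<2 * ln X} \<longrightarrow> \<alpha> t = (0, 0))
             \<and> (AE t in lborel. t \<in> {2 * ln X..T} \<longrightarrow> \<alpha> t = (1, 0))))"
proof -
  from opt have \<alpha>U: "\<alpha> \<in> U1 T" and tr\<xi>: "is_traj T \<alpha> x0 \<xi>"
    and optc: "\<And>\<beta> \<eta>. \<beta> \<in> U1 T \<Longrightarrow> is_traj T \<beta> x0 \<eta> \<Longrightarrow> cost (\<xi> T) \<le> cost (\<eta> T)"
    by (auto simp: optimal_pair_def)
  interpret A: adm T x0 \<alpha> \<xi> using T_pos init_mean \<alpha>U tr\<xi> by unfold_locales
  define m0 where "m0 = mean x0"
  define E where "E = exp (T/2)"
  have AE_eq: "A.E = E" by (simp add: A.E_def E_def)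
  have m0pos: "m0 > 0" using init_mean by (simp add: m0_def)
  have E1: "E > 1" using A.E_gt1 AE_eq by simp
  define X where "X = A.X"
  have X1: "X \<ge> 1" and XE: "X \<le> E" using A.X_ge1 A.X_leE AE_eq by (auto simp: X_def)
  define D where "D = exp T * A.d T"
  define c where "c = 4 * exp (2*T) * cost (\<xi> T)"
  have cmp: "c \<le> 4 * exp (2*T) * cost (\<eta> T)" if "\<beta> \<in> U1 T" "is_traj T \<beta> x0 \<eta>" for \<beta> \<eta>
    using optc[OF that] unfolding c_def by simp
  have c_eq: "c = (2 * (m0 * X * E))^2 + D^2" using A.cost4 AE_eq by (simp add: c_def D_def X_def m0_def)
  have slack: "D = Dfun x0 E X + A.sl1 + 2 * A.sl2 + 2 * A.sl3"
    using A.slack_eq AE_eq by (simp add: D_def X_def)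
  have sl_nn: "A.sl1 \<ge> 0" "A.sl2 \<ge> 0" "A.sl3 \<ge> 0" using A.sl1_nonneg A.sl2_nonneg A.sl3_nonneg by auto
  have cbb: "c \<le> Ffun x0 E Y" if Y1: "1 \<le> Y" and YE: "Y \<le> E" for Y
  proof -
    obtain \<beta> \<eta> where "\<beta> \<in> U1 T" "is_traj T \<beta> x0 \<eta>" "4 * exp (2*T) * cost (\<eta> T) = Ffun x0 (exp (T/2)) Y"
      using comp_bb[OF T_pos init_mean Y1 YE[unfolded E_def]] by blast
    then show ?thesis using cmp E_def by metis
  qed
  have kpos: "2 * (m0 * E) > 0" using m0pos E1 by simp
  have sqmono: "(2 * (m0 * E))^2 \<le> (2 * (m0 * X * E))^2"
  proof -
    have "2 * (m0 * E) \<le> 2 * (m0 * X * E)" using X1 m0pos E1 by (simp add: mult_left_mono mult_right_mono)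
    then show ?thesis using kpos by (intro power_mono) auto
  qed
  have d_eq0_iff: "A.d T = 0 \<longleftrightarrow> fst (\<xi> T) = snd (\<xi> T)" by (simp add: A.d_def)
  have caseI: "fst (\<xi> T) = snd (\<xi> T) \<and> X = 1" if Tt0: "t0 \<le> T"
  proof -
    have ci: "(\<lambda>t. if t < 2 * ln (fst x0 / mean x0) then (1::real, 0::real) else (1/2, 1/2)) \<in> U1 T \<and>
      (\<exists>\<eta>. is_traj T (\<lambda>t. if t < 2 * ln (fst x0 / mean x0) then (1::real, 0::real) else (1/2, 1/2)) x0 \<eta> \<and>
        4 * exp (2*T) * cost (\<eta> T) = (2 * (mean x0 * exp (T/2)))^2)"
      by (rule comp_i[OF T_pos init_mean init_order Tt0[unfolded t0_def]])
    then have cle: "c \<le> (2 * (m0 * E))^2" using cmp by (metis E_def m0_def)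
    have "D^2 \<le> 0" using cle c_eq sqmono by linarith
    then have "D = 0" by simp
    then have dT0: "A.d T = 0" by (simp add: D_def)
    have "(2 * (m0 * X * E))^2 \<le> (2 * (m0 * E))^2" using cle c_eq by (smt (verit) zero_le_power2)
    then have "2 * (m0 * X * E) \<le> 2 * (m0 * E)" by (rule power2_le_imp_le) (use kpos in simp)
    then have "(m0 * E) * X \<le> (m0 * E) * 1" by (simp add: algebra_simps)
    moreover have "m0 * E > 0" using m0pos E1 by simp
    ultimately have "X \<le> 1" by (simp only: mult_le_cancel_left_pos)
    with dT0 show ?thesis using X1 d_eq0_iff by auto
  qed
  have caseII: "Dfun x0 E X > 0 \<and> A.sl1 = 0 \<and> A.sl2 = 0 \<and> X < E \<and> (\<forall>Y\<in>{1..E}. Ffun x0 E X \<le> Ffun x0 E Y)"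
    if Tt0: "T < t0"
  proof -
    define p where "p = fst x0"
    define q where "q = snd x0"
    have q_eq: "q = 2 * m0 - p" by (simp add: p_def q_def m0_def mean_def field_simps)
    have pm0: "p > m0" using init_order q_eq by (simp add: p_def q_def)
    have Ep: "E < p / m0"
    proof -
      have "T/2 < ln (p / m0)" using Tt0 by (simp add: t0_def p_def m0_def)
      then have "exp (T/2) < exp (ln (p / m0))" by simp
      then show ?thesis using pm0 m0pos by (simp add: E_def)
    qed
    have Dfe: "Dfun x0 E Y = 2 * p - 2 * m0 + 2 * (m0 * Y^2) - 2 * (m0 * Y * E)" for Y
      by (simp add: Dfun_def p_def[symmetric] q_def[symmetric] m0_def[symmetric] q_eq)
    have D1: "Dfun x0 E 1 > 0"
    proof -
      have "m0 * E < p" using Ep m0pos by (simp add: field_simps)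
      then show ?thesis using Dfe[of 1] by simp
    qed
    have Dpos: "Dfun x0 E X > 0"
    proof (rule ccontr)
      assume nD: "\<not> Dfun x0 E X > 0"
      have "X \<noteq> 1" using nD D1 by auto
      define \<epsilon> where "\<epsilon> = X - 1"
      have \<epsilon>pos: "\<epsilon> > 0" using X1 \<open>X \<noteq> 1\<close> by (simp add: \<epsilon>_def)
      define k where "k = 2 * (m0 * E)"
      have id1: "Dfun x0 E 1 = Dfun x0 E X + 2 * m0 * \<epsilon> * (E - 1 - X)"
        unfolding Dfe \<epsilon>_def by (simp add: algebra_simps power2_eq_square)
      have "2 * m0 * \<epsilon> * (E - 1 - X) \<le> 2 * m0 * \<epsilon> * E"
        using m0pos \<epsilon>pos X1 by (intro mult_left_mono) auto
      then have h1: "Dfun x0 E 1 \<le> k * \<epsilon>" using id1 nD by (simp add: k_def algebra_simps)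
      have h2: "(Dfun x0 E 1)^2 \<le> k^2 * \<epsilon>^2"
        using power_mono[OF h1, of 2] D1 by (simp add: power_mult_distrib)
      have h3: "(2 * (m0 * X * E))^2 = k^2 + 2 * (k^2 * \<epsilon>) + k^2 * \<epsilon>^2"
        unfolding k_def \<epsilon>_def by (simp add: algebra_simps power2_eq_square)
      have h5: "Ffun x0 E 1 = k^2 + (Dfun x0 E 1)^2" by (simp add: Ffun_def k_def m0_def)
      have "c \<le> Ffun x0 E 1" using cbb[of 1] E1 by simp
      moreover have "(2 * (m0 * X * E))^2 \<le> c" using c_eq by simp
      moreover have "k^2 * \<epsilon> > 0" using kpos \<epsilon>pos m0pos E1 by (intro mult_pos_pos) (simp_all add: k_def)
      ultimately show False using h2 h3 h5 by linarith
    qed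
    have Dge: "D \<ge> Dfun x0 E X" using slack sl_nn by linarith
    have cge: "c \<ge> Ffun x0 E X"
    proof -
      have "(Dfun x0 E X)^2 \<le> D^2" using Dge Dpos by (intro power_mono) auto
      then show ?thesis using c_eq by (simp add: Ffun_def m0_def)
    qed
    have cle: "c \<le> Ffun x0 E X" using cbb X1 XE by simp
    have "D^2 \<le> (Dfun x0 E X)^2" using cle c_eq by (simp add: Ffun_def m0_def)
    then have "D \<le> Dfun x0 E X" by (rule power2_le_imp_le) (use Dpos in simp)
    then have sl0: "A.sl1 = 0" "A.sl2 = 0" using slack sl_nn by linarith+
    have amin: "\<forall>Y\<in>{1..E}. Ffun x0 E X \<le> Ffun x0 E Y" using cge cbb by force
    have XltE: "X < E"
    proof (rule ccontr)
      assume "\<not> X < E"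
      then have XeqE: "X = E" using XE by simp
      define \<delta> where "\<delta> = (p - q) / (2 * m0)"
      have \<delta>pos: "\<delta> > 0" using init_order m0pos by (simp add: \<delta>_def p_def q_def)
      define \<epsilon> where "\<epsilon> = min (E - 1) (\<delta> / E)"
      have \<epsilon>pos: "\<epsilon> > 0" using E1 \<delta>pos by (simp add: \<epsilon>_def)
      define Y where "Y = E - \<epsilon>"
      have Y1: "1 \<le> Y" and YE: "Y < E" using \<epsilon>pos by (auto simp: Y_def \<epsilon>_def)
      have "E * \<epsilon> \<le> \<delta>" using E1 by (simp add: \<epsilon>_def min_def field_simps split: if_splits)
      moreover have "Y * \<epsilon> \<le> E * \<epsilon>" using YE \<epsilon>pos by simp
      ultimately have Ye: "Y * \<epsilon> \<le> \<delta>" by simp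
      have DY: "Dfun x0 E Y = (p - q) - 2 * m0 * (Y * \<epsilon>)"
        unfolding Dfe Y_def by (simp add: q_eq algebra_simps power2_eq_square)
      have DE: "Dfun x0 E E = p - q" unfolding Dfe by (simp add: q_eq algebra_simps power2_eq_square)
      have "2 * m0 * (Y * \<epsilon>) \<le> 2 * m0 * \<delta>" using Ye m0pos by simp
      also have "\<dots> = p - q" using m0pos by (simp add: \<delta>_def)
      finally have DY0: "0 \<le> Dfun x0 E Y" using DY by simp
      have "Dfun x0 E Y \<le> Dfun x0 E E" using DY DE m0pos \<epsilon>pos Y1 by simp
      then have s1: "(Dfun x0 E Y)^2 \<le> (Dfun x0 E E)^2" using DY0 by (intro power_mono) auto
      have "2 * (m0 * Y * E) < 2 * (m0 * E * E)" using YE m0pos E1 by simp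
      then have s2: "(2 * (m0 * Y * E))^2 < (2 * (m0 * E * E))^2"
        using m0pos Y1 E1 by (intro power_strict_mono) auto
      have "Ffun x0 E Y < Ffun x0 E E" using s1 s2 by (simp add: Ffun_def m0_def)
      moreover have "Ffun x0 E X \<le> Ffun x0 E Y" using amin Y1 YE by simp
      ultimately show False using XeqE by simp
    qed
    show ?thesis using Dpos sl0 XltE amin by auto
  qed
  have dpos_II: "A.d T > 0" if "T < t0"
  proof -
    have "D \<ge> Dfun x0 E X" using slack sl_nn by linarith
    then have "D > 0" using caseII[OF that] by linarith
    then show ?thesis by (simp add: D_def zero_less_mult_iff)
  qed
  have part1: "T \<ge> t0 \<longleftrightarrow> fst (\<xi> T) = snd (\<xi> T)"
  proof
    assume "T \<ge> t0" then show "fst (\<xi> T) = snd (\<xi> T)" using caseI by auto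
  next
    assume eq: "fst (\<xi> T) = snd (\<xi> T)"
    show "T \<ge> t0"
    proof (rule ccontr)
      assume "\<not> T \<ge> t0"
      then have "A.d T > 0" using dpos_II by simp
      then show False using eq d_eq0_iff by simp
    qed
  qed
  have part2: "(AE t in lborel. t \<in> {0..T} \<longrightarrow> fst (\<alpha> t) + snd (\<alpha> t) = 1)
        \<and> (\<forall>t\<in>{0..T}. mean (\<xi> t) = mean x0 * exp (- t / 2))
        \<and> optimal_control T x0 (\<lambda>t. if t < t0 then (1, 0) else (1/2, 1/2))" if Tt0: "T \<ge> t0"
  proof (intro conjI)
    have AX: "A.X = 1" using caseI[OF Tt0] by (simp add: X_def)
    show "AE t in lborel. t \<in> {0..T} \<longrightarrow> fst (\<alpha> t) + snd (\<alpha> t) = 1" by (rule A.X1_cons(1)[OF AX])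
    show "\<forall>t\<in>{0..T}. mean (\<xi> t) = mean x0 * exp (- t / 2)" using A.X1_cons(2)[OF AX] by (simp add: A.m_def)
    have ci: "(\<lambda>t. if t < 2 * ln (fst x0 / mean x0) then (1::real, 0::real) else (1/2, 1/2)) \<in> U1 T \<and>
      (\<exists>\<eta>. is_traj T (\<lambda>t. if t < 2 * ln (fst x0 / mean x0) then (1::real, 0::real) else (1/2, 1/2)) x0 \<eta> \<and>
        4 * exp (2*T) * cost (\<eta> T) = (2 * (mean x0 * exp (T/2)))^2)"
      by (rule comp_i[OF T_pos init_mean init_order Tt0[unfolded t0_def]])
    then obtain \<eta> where U': "(\<lambda>t. if t < t0 then (1::real, 0::real) else (1/2, 1/2)) \<in> U1 T"
      and tr': "is_traj T (\<lambda>t. if t < t0 then (1::real, 0::real) else (1/2, 1/2)) x0 \<eta>"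
      and c': "4 * exp (2*T) * cost (\<eta> T) = (2 * (mean x0 * exp (T/2)))^2"
      unfolding t0_def by blast
    show "optimal_control T x0 (\<lambda>t. if t < t0 then (1, 0) else (1/2, 1/2))"
      unfolding optimal_control_def optimal_pair_def
    proof (intro exI conjI allI impI)
      show "(\<lambda>t. if t < t0 then (1::real, 0::real) else (1/2, 1/2)) \<in> U1 T" by (rule U')
      show "is_traj T (\<lambda>t. if t < t0 then (1::real, 0::real) else (1/2, 1/2)) x0 \<eta>" by (rule tr')
      fix \<beta> \<eta>' assume b: "\<beta> \<in> U1 T" and t': "is_traj T \<beta> x0 \<eta>'"
      interpret B: adm T x0 \<beta> \<eta>' using T_pos init_mean b t' by unfold_locales
      have "4 * exp (2*T) * cost (\<eta> T) \<le> 4 * exp (2*T) * cost (\<eta>' T)"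
        using B.LB1 c' by (simp add: B.E_def)
      then show "cost (\<eta> T) \<le> cost (\<eta>' T)" by simp
    qed
  qed
  have part3: "\<exists>X. X \<in> {1..<exp (T/2)}
             \<and> (\<forall>Y\<in>{1..exp (T/2)}.
                  (fst x0 + mean x0 * (X^2 - 1))^2
                    + (snd x0 + mean x0 * (X^2 - 1) + 2 * mean x0 * X * (exp (T/2) - X))^2
                  \<le> (fst x0 + mean x0 * (Y^2 - 1))^2
                    + (snd x0 + mean x0 * (Y^2 - 1) + 2 * mean x0 * Y * (exp (T/2) - Y))^2)
             \<and> (AE t in lborel. t \<in> {0..<2 * ln X} \<longrightarrow> \<alpha> t = (0, 0))
             \<and> (AE t in lborel. t \<in> {2 * ln X..T} \<longrightarrow> \<alpha> t = (1, 0))" if Tt0: "T < t0"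
  proof (intro exI conjI)
    note II = caseII[OF Tt0]
    show "X \<in> {1..<exp (T/2)}" using X1 II by (simp add: E_def)
    show "\<forall>Y\<in>{1..exp (T/2)}.
                  (fst x0 + mean x0 * (X^2 - 1))^2
                    + (snd x0 + mean x0 * (X^2 - 1) + 2 * mean x0 * X * (exp (T/2) - X))^2
                  \<le> (fst x0 + mean x0 * (Y^2 - 1))^2
                    + (snd x0 + mean x0 * (Y^2 - 1) + 2 * mean x0 * Y * (exp (T/2) - Y))^2"
      using II unfolding Gfun_eq by (simp add: E_def)
    have tau: "2 * ln X = A.\<tau>" by (simp add: A.\<tau>_def X_def)
    have ti: "A.\<tau> \<in> {0..T}" by (rule A.tau_in)
    show "AE t in lborel. t \<in> {0..<2 * ln X} \<longrightarrow> \<alpha> t = (0, 0)"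
      using A.sl2_cons(1) II unfolding tau
      by (auto elim!: eventually_mono simp: prod_eq_iff)
    show "AE t in lborel. t \<in> {2 * ln X..T} \<longrightarrow> \<alpha> t = (1, 0)"
    proof -
      have "AE t in lborel. (t \<in> {A.\<tau>..T} \<longrightarrow> fst (\<alpha> t) + snd (\<alpha> t) = 1) \<and> (t \<in> {0..T} \<longrightarrow> snd (\<alpha> t) = 0)"
        using A.sl2_cons(2) A.sl1_cons II by (intro eventually_conj) auto
      then show ?thesis unfolding tau
        by (rule eventually_mono) (use ti in \<open>auto simp: prod_eq_iff\<close>)
    qed
  qed
  show ?thesis using part1 part2 part3 by blast
qed

end
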